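(* Let $n\geq 4$ and let $X_n$ be the rack of transpositions of $\mathbb{S}_n$. Let $-1$ denote the constant rack $2$-cocycle on $X_n$ with value $-1$, and let $\chi:X_n\times X_n\to\mathbb{C}^\times$ be given, for $\sigma\in X_n$ and $\tau=(i\;j)\in X_n$ with $i<j$, by $\chi(\sigma,\tau)=1$ if $\sigma(i)<\sigma(j)$ and $\chi(\sigma,\tau)=-1$ if $\sigma(i)>\sigma(j)$. Then the rack $2$-cocycles $\chi$ and $-1$ on $X_n$ are equivalent by twist. Consequently, the Nichols algebras $\mathfrak{B}(X_n,-1)$ and $\mathfrak{B}(X_n,\chi)$ have the same Hilbert series.
   Context: A rack is a non-empty set $X$ with a map $\triangleright:X\times X\to X$ such that $y\mapsto x\triangleright y$ is bijective for all $x$ and $x\triangleright(y\triangleright z)=(x\triangleright y)\triangleright(x\triangleright z)$. $X_n$ is the set of transpositions in $\mathbb{S}_n$ with $x\triangleright y=xyx^{-1}$. A rack $2$-cocycle is a map $q:X\times X\to\mathbb{C}^\times$ with $q_{x,y\triangleright z}q_{y,z}=q_{x\triangleright y,x\triangleright z}q_{x,z}$ for all $x,y,z$. For a map $\phi:X\times X\to\mathbb{C}^\times$ define $q^\phi_{x,y}=\phi(x,y)\phi(x\triangleright y,x)^{-1}q_{x,y}$. Two rack $2$-cocycles $q,q'$ on $X$ are equivalent by twist if there exists $\phi:X\times X\to\mathbb{C}^\times$ with $q'=q^\phi$. Given a rack $2$-cocycle $q$ on a finite rack $X$, let $V=\mathbb{C}X$ with basis $X$ and braiding $c(x\otimes y)=q_{x,y}\,(x\triangleright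 y)\otimes x$; this induces a representation $\rho_m$ of the braid group $\mathbb{B}_m$ on $V^{\otimes m}$ with $\rho_m(\sigma_i)=\mathrm{id}^{\otimes(i-1)}\otimes c\otimes\mathrm{id}^{\otimes(m-i-1)}$. Let $\mu:\mathbb{S}_m\to\mathbb{B}_m$ be the Matsumoto section ($\mu((i\;i+1))=\sigma_i$, $\mu(xy)=\mu(x)\mu(y)$ when lengths add), and $Q_m=\sum_{\sigma\in\mathbb{S}_m}\rho_m(\mu(\sigma))$ for $m\ge2$. The Nichols algebra is $\mathfrak{B}(X,q)=T(V)/\bigoplus_{m\ge2}\ker Q_m$, graded by tensor degree; its Hilbert series is $\sum_{m\ge0}\dim\mathfrak{B}^m(X,q)\,t^m$. *)

theory Defs
  imports Complex_Main "HOL-Library.Function_Algebras" "HOL-Combinatorics.Transposition"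
    "HOL-Combinatorics.Permutations" "HOL-Computational_Algebra.Formal_Power_Series"
begin

text \<open>Permutations of {1..n} are represented as functions nat => nat (identity outside {1..n}).\<close>

definition rack_op :: "(nat \<Rightarrow> nat) \<Rightarrow> (nat \<Rightarrow> nat) \<Rightarrow> (nat \<Rightarrow> nat)" where
  "rack_op x y = x \<circ> y \<circ> inv x"

definition Xn :: "nat \<Rightarrow> (nat \<Rightarrow> nat) set" where
  "Xn n = {transpose i j | i j. 1 \<le> i \<and> i < j \<and> j \<le> n}"

definition rack_2cocycle :: "'a set \<Rightarrow> ('a \<Rightarrow> 'a \<Rightarrow> 'a) \<Rightarrow> ('a \<Rightarrow> 'a \<Rightarrow> complex) \<Rightarrow> bool" where
  "rack_2cocycle X r q \<longleftrightarrow>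
     (\<forall>x\<in>X. \<forall>y\<in>X. q x y \<noteq> 0) \<and>
     (\<forall>x\<in>X. \<forall>y\<in>X. \<forall>z\<in>X. q x (r y z) * q y z = q (r x y) (r x z) * q x z)"

definition twist :: "('a \<Rightarrow> 'a \<Rightarrow> 'a) \<Rightarrow> ('a \<Rightarrow> 'a \<Rightarrow> complex) \<Rightarrow> ('a \<Rightarrow> 'a \<Rightarrow> complex)
    \<Rightarrow> ('a \<Rightarrow> 'a \<Rightarrow> complex)" where
  "twist r q \<phi> x y = \<phi> x y * inverse (\<phi> (r x y) x) * q x y"

definition equiv_by_twist :: "'a set \<Rightarrow> ('a \<Rightarrow> 'a \<Rightarrow> 'a) \<Rightarrow> ('a \<Rightarrow> 'a \<Rightarrow> complex)
    \<Rightarrow> ('a \<Rightarrow> 'a \<Rightarrow> complex) \<Rightarrow> bool" where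
  "equiv_by_twist X r q q' \<longleftrightarrow>
     (\<exists>\<phi>. (\<forall>x\<in>X. \<forall>y\<in>X. \<phi> x y \<noteq> 0) \<and> (\<forall>x\<in>X. \<forall>y\<in>X. q' x y = twist r q \<phi> x y))"

definition chi :: "(nat \<Rightarrow> nat) \<Rightarrow> (nat \<Rightarrow> nat) \<Rightarrow> complex" where
  "chi \<sigma> \<tau> = (if \<exists>i j. i < j \<and> \<tau> = transpose i j \<and> \<sigma> i > \<sigma> j then -1 else 1)"

text \<open>V^{\<otimes> m} has basis the words of length m over X; vectors are functions
  from words to complex numbers supported on these words.\<close>

definition words :: "'a set \<Rightarrow> nat \<Rightarrow> 'a list set" where
  "words X m = {w. length w = m \<and> set w \<subseteq> X}"

definition tensor_space :: "'a set \<Rightarrow> nat \<Rightarrow> ('a list \<Rightarrow> complex) set" where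
  "tensor_space X m = {f. \<forall>w. w \<notin> words X m \<longrightarrow> f w = 0}"

text \<open>rho_m(sigma_i), 1 <= i < m, acting on positions i, i+1 (1-indexed), as a linear map:
  basis word w goes to q(x,y) * w' where x, y are the letters at positions i, i+1 and
  w' has (x |> y, x) there.\<close>
definition braid_gen :: "'a set \<Rightarrow> ('a \<Rightarrow> 'a \<Rightarrow> 'a) \<Rightarrow> ('a \<Rightarrow> 'a \<Rightarrow> complex) \<Rightarrow> nat \<Rightarrow> nat
    \<Rightarrow> ('a list \<Rightarrow> complex) \<Rightarrow> ('a list \<Rightarrow> complex)" where
  "braid_gen X r q m i f = (\<lambda>v. \<Sum>w\<in>words X m.
      (if v = w[i - 1 := r (w ! (i - 1)) (w ! i), i := w ! (i - 1)]
       then q (w ! (i - 1)) (w ! i) * f w else 0))"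

definition rho_word :: "'a set \<Rightarrow> ('a \<Rightarrow> 'a \<Rightarrow> 'a) \<Rightarrow> ('a \<Rightarrow> 'a \<Rightarrow> complex) \<Rightarrow> nat \<Rightarrow> nat list
    \<Rightarrow> ('a list \<Rightarrow> complex) \<Rightarrow> ('a list \<Rightarrow> complex)" where
  "rho_word X r q m ws = foldr (\<lambda>i g. braid_gen X r q m i \<circ> g) ws id"

definition perm_word :: "nat list \<Rightarrow> (nat \<Rightarrow> nat)" where
  "perm_word ws = foldr (\<lambda>i p. transpose i (Suc i) \<circ> p) ws id"

definition reduced_word :: "nat \<Rightarrow> (nat \<Rightarrow> nat) \<Rightarrow> nat list" where
  "reduced_word m \<sigma> = (SOME ws. set ws \<subseteq> {1..<m} \<and> perm_word ws = \<sigma> \<and>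
      (\<forall>vs. set vs \<subseteq> {1..<m} \<and> perm_word vs = \<sigma> \<longrightarrow> length ws \<le> length vs))"

definition Q_op :: "'a set \<Rightarrow> ('a \<Rightarrow> 'a \<Rightarrow> 'a) \<Rightarrow> ('a \<Rightarrow> 'a \<Rightarrow> complex) \<Rightarrow> nat
    \<Rightarrow> ('a list \<Rightarrow> complex) \<Rightarrow> ('a list \<Rightarrow> complex)" where
  "Q_op X r q m f = (\<lambda>w. \<Sum>\<sigma>\<in>{\<sigma>. \<sigma> permutes {1..m}}. rho_word X r q m (reduced_word m \<sigma>) f w)"

text \<open>dim B^m(X,q) = dim T^m / ker Q_m = dim of the image of Q_m on T^m
  (for m < 2, Q_m is the identity, so B^m = T^m).\<close>
definition nichols_dim :: "'a set \<Rightarrow> ('a \<Rightarrow> 'a \<Rightarrow> 'a) \<Rightarrow> ('a \<Rightarrow> 'a \<Rightarrow> complex) \<Rightarrow> nat \<Rightarrow> nat" where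
  "nichols_dim X r q m =
     vector_space.dim (\<lambda>(c::complex) f w. c * f w) (Q_op X r q m ` tensor_space X m)"

definition hilbert_series :: "'a set \<Rightarrow> ('a \<Rightarrow> 'a \<Rightarrow> 'a) \<Rightarrow> ('a \<Rightarrow> 'a \<Rightarrow> complex) \<Rightarrow> nat fps" where
  "hilbert_series X r q = Abs_fps (nichols_dim X r q)"

end

theory Submission
  imports Defs
begin


definition sg :: "nat \<Rightarrow> nat \<Rightarrow> real" where "sg p q = (if p < q then 1 else -1)"

lemma transpose_uniq:
  assumes "i < j" "i' < j'" "transpose i j = (transpose i' j' :: nat \<Rightarrow> nat)"
  shows "i = i' \<and> j = j'"
proof -
  have 1: "transpose i' j' i = j" "transpose i' j' j = i" using assms(3) by (metis transpose_apply_first transpose_apply_second)+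
  then show ?thesis using assms(1,2) by (auto simp: transpose_def split: if_splits)
qed

lemma chi_lt: "i < j \<Longrightarrow> chi \<sigma> (transpose i j) = (if \<sigma> j < \<sigma> i then -1 else 1)"
proof -
  assume ij: "i < j"
  have "(\<exists>i' j'. i' < j' \<and> transpose i j = transpose i' j' \<and> \<sigma> i' > \<sigma> j') \<longleftrightarrow> \<sigma> j < \<sigma> i"
    using transpose_uniq[OF ij] ij by blast
  then show ?thesis by (simp add: chi_def)
qed

lemma chi_eq: "i \<noteq> j \<Longrightarrow> \<sigma> i \<noteq> \<sigma> j \<Longrightarrow> chi \<sigma> (transpose i j) = of_real (sg (\<sigma> i) (\<sigma> j) * sg i j)"
proof (cases "i < j")
  case True
  assume "\<sigma> i \<noteq> \<sigma> j"
  then show ?thesis using True by (auto simp: chi_lt sg_def)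
next
  case False
  assume "i \<noteq> j" "\<sigma> i \<noteq> \<sigma> j"
  then have "j < i" using False by simp
  then show ?thesis using \<open>\<sigma> i \<noteq> \<sigma> j\<close> by (auto simp: chi_lt sg_def transpose_commute[of i j])
qed

lemma rack_op_transpose:
  assumes p: "bij p" shows "rack_op p (transpose i j) = transpose (p i) (p j)"
proof (rule ext)
  fix k
  have inj: "inj p" using p bij_is_inj by auto
  obtain k' where k: "k = p k'" using p bij_is_surj by (metis surjD)
  have "inv p k = k'" using k inj by (simp add: inv_f_f)
  then show "rack_op p (transpose i j) k = transpose (p i) (p j) k"
    using k inj by (simp add: rack_op_def transpose_def inj_eq)
qed

definition TR :: "(nat \<Rightarrow> nat) set" where "TR = {x. \<exists>a b. a < b \<and> x = transpose a b}"

lemma Xn_TR: "Xn n \<subseteq> TR" by (auto simp: Xn_def TR_def)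

lemma TR_bij: "x \<in> TR \<Longrightarrow> bij x" by (auto simp: TR_def)

lemma sg_sq: "sg p q * sg p q = 1" by (simp add: sg_def)

lemma chi_cocycle:
  assumes x: "bij x" and y: "bij y" and z: "z \<in> TR"
  shows "chi x (rack_op y z) * chi y z = chi (rack_op x y) (rack_op x z) * chi x z"
proof -
  obtain i j where ij: "i < j" "z = transpose i j" using z by (auto simp: TR_def)
  have injx: "inj x" and injy: "inj y" using x y bij_is_inj by auto
  have ne: "i \<noteq> j" using ij by simp
  have yne: "y i \<noteq> y j" using injy ne by (meson injD)
  have xne: "x i \<noteq> x j" using injx ne by (meson injD)
  have xyne: "x (y i) \<noteq> x (y j)" using injx yne by (meson injD)
  have rxy: "rack_op x y (x k) = x (y k)" for k
    using injx by (simp add: rack_op_def inv_f_f)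
  have L: "chi x (rack_op y z) * chi y z = of_real (sg (x (y i)) (x (y j)) * sg (y i) (y j)) * of_real (sg (y i) (y j) * sg i j)"
    using ij rack_op_transpose[OF y] chi_eq[OF yne xyne] chi_eq[OF ne yne] by simp
  have R: "chi (rack_op x y) (rack_op x z) * chi x z = of_real (sg (x (y i)) (x (y j)) * sg (x i) (x j)) * of_real (sg (x i) (x j) * sg i j)"
    using ij rack_op_transpose[OF x] chi_eq[OF xne, of "rack_op x y"] rxy xyne chi_eq[OF ne xne] by simp
  have "sg (x (y i)) (x (y j)) * sg (y i) (y j) * (sg (y i) (y j) * sg i j) = sg (x (y i)) (x (y j)) * sg (x i) (x j) * (sg (x i) (x j) * sg i j)"
    by (simp add: sg_def)
  then show ?thesis unfolding L R by (metis of_real_mult)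
qed


section \<open>Clifford operators\<close>

definition tog :: "nat \<Rightarrow> nat set \<Rightarrow> nat set" where
  "tog k T = (if k \<in> T then T - {k} else insert k T)"
definition sgc :: "nat \<Rightarrow> nat set \<Rightarrow> real" where
  "sgc k T = (-1) ^ card {t\<in>T. t < k}"
definition E :: "nat \<Rightarrow> (nat set \<Rightarrow> real) \<Rightarrow> (nat set \<Rightarrow> real)" where
  "E k f = (\<lambda>T. sgc k T * f (tog k T))"
definition sc :: "real \<Rightarrow> (nat set \<Rightarrow> real) \<Rightarrow> (nat set \<Rightarrow> real)" where
  "sc c f = (\<lambda>T. c * f T)"

lemma tog_tog [simp]: "tog k (tog k T) = T"
  by (auto simp: tog_def)

lemma tog_comm: "tog k (tog l T) = tog l (tog k T)"
  by (auto simp: tog_def)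

lemma sgc_tog_same [simp]: "sgc k (tog k T) = sgc k T"
proof -
  have "{t \<in> tog k T. t < k} = {t\<in>T. t < k}" by (auto simp: tog_def)
  then show ?thesis by (simp add: sgc_def)
qed

lemma sgc_tog_lt: "k < l \<Longrightarrow> sgc k (tog l T) = sgc k T"
proof -
  assume "k < l"
  then have "{t \<in> tog l T. t < k} = {t\<in>T. t < k}" by (auto simp: tog_def)
  then show ?thesis by (simp add: sgc_def)
qed

lemma sgc_tog_gt: "k < l \<Longrightarrow> sgc l (tog k T) = - sgc l T"
proof -
  assume kl: "k < l"
  define S where "S = {t\<in>T. t < l}"
  have fin: "finite S" unfolding S_def by (rule finite_subset[of _ "{..<l}"]) auto
  show ?thesis
  proof (cases "k \<in> T")
    case True
    then have e: "{t \<in> tog k T. t < l} = S - {k}" by (auto simp: tog_def S_def)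
    have kS: "k \<in> S" using True kl by (auto simp: S_def)
    then have "card S \<noteq> 0" using fin by auto
    then obtain c0 where c0: "card S = Suc c0" using not0_implies_Suc by blast
    have "card (S - {k}) = c0" using c0 kS fin by simp
    then show ?thesis using e c0 by (simp add: sgc_def S_def[symmetric])
  next
    case False
    then have e: "{t \<in> tog k T. t < l} = insert k S" using kl by (auto simp: tog_def S_def)
    have "k \<notin> S" using False by (auto simp: S_def)
    then have "card (insert k S) = Suc (card S)" using fin by simp
    then show ?thesis using e by (simp add: sgc_def S_def[symmetric])
  qed
qed

lemma sgc_sq: "sgc k T * sgc k T = 1"
  by (simp add: sgc_def flip: power_add)

lemma EE_same [simp]: "E k (E k f) = f"
  by (rule ext) (simp add: E_def mult.assoc[symmetric] sgc_sq)

lemma EE_anti_lt: "k < l \<Longrightarrow> E k (E l f) = - E l (E k f)"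
  by (rule ext) (simp add: E_def sgc_tog_lt sgc_tog_gt tog_comm)

lemma EE_anti: "k \<noteq> l \<Longrightarrow> E k (E l f) = - E l (E k f)"
proof (cases "k < l")
  case True then show ?thesis by (rule EE_anti_lt)
next
  case False
  assume "k \<noteq> l" then have "l < k" using False by simp
  then show ?thesis using EE_anti_lt[of l k f] by simp
qed

lemma E_diff [simp]: "E k (f - g) = E k f - E k g"
  by (rule ext) (simp add: E_def algebra_simps)
lemma E_add [simp]: "E k (f + g) = E k f + E k g"
  by (rule ext) (simp add: E_def algebra_simps)
lemma E_uminus [simp]: "E k (- f) = - E k f"
  by (rule ext) (simp add: E_def)
lemma E_sc [simp]: "E k (sc c f) = sc c (E k f)"
  by (rule ext) (simp add: E_def sc_def)
lemma E_zero [simp]: "E k 0 = 0"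
  by (rule ext) (simp add: E_def)

definition V :: "nat \<Rightarrow> nat \<Rightarrow> (nat set \<Rightarrow> real) \<Rightarrow> (nat set \<Rightarrow> real)" where
  "V i j f = E i f - E j f"

lemma V_key:
  assumes ab: "a \<noteq> b" and ij: "i \<noteq> j"
  shows "V a b (V i j f) = - V (transpose a b i) (transpose a b j) (V a b f)"
proof -
  have exa: "E k (E l f) T = - E l (E k f) T" if "k \<noteq> l" for k l T
    using EE_anti[OF that, of f] by simp
  have sq: "E k (E k f) T = f T" for k T by simp
  consider "i \<noteq> a" "i \<noteq> b" "j \<noteq> a" "j \<noteq> b" | "i = a" "j = b" | "i = b" "j = a"
    | "i = a" "j \<noteq> a" "j \<noteq> b" | "i = b" "j \<noteq> a" "j \<noteq> b"
    | "j = a" "i \<noteq> a" "i \<noteq> b" | "j = b" "i \<noteq> a" "i \<noteq> b"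
    using ab ij by blast
  then show ?thesis
  proof cases
    case 1
    show ?thesis
    proof (rule ext)
      fix T
      have "E a (E i f) T = - E i (E a f) T" "E a (E j f) T = - E j (E a f) T"
           "E b (E i f) T = - E i (E b f) T" "E b (E j f) T = - E j (E b f) T"
        using 1 by (auto intro!: exa)
      then show "V a b (V i j f) T = (- V (transpose a b i) (transpose a b j) (V a b f)) T"
        using 1 by (simp add: V_def)
    qed
  next
    case 2
    show ?thesis
    proof (rule ext)
      fix T
      have "E b (E a f) T = - E a (E b f) T" using ab by (auto intro!: exa)
      then show "V a b (V i j f) T = (- V (transpose a b i) (transpose a b j) (V a b f)) T"
        using 2 by (simp add: V_def)
    qed
  next
    case 3
    show ?thesis
    proof (rule ext)
      fix T
      have "E b (E a f) T = - E a (E b f) T" using ab by (auto intro!: exa)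
      then show "V a b (V i j f) T = (- V (transpose a b i) (transpose a b j) (V a b f)) T"
        using 3 by (simp add: V_def)
    qed
  next
    case 4
    show ?thesis
    proof (rule ext)
      fix T
      have "E j (E a f) T = - E a (E j f) T" "E j (E b f) T = - E b (E j f) T" "E b (E a f) T = - E a (E b f) T"
        using 4 ab by (auto intro!: exa)
      then show "V a b (V i j f) T = (- V (transpose a b i) (transpose a b j) (V a b f)) T"
        using 4 by (simp add: V_def)
    qed
  next
    case 5
    show ?thesis
    proof (rule ext)
      fix T
      have "E j (E a f) T = - E a (E j f) T" "E j (E b f) T = - E b (E j f) T" "E b (E a f) T = - E a (E b f) T"
        using 5 ab by (auto intro!: exa)
      then show "V a b (V i j f) T = (- V (transpose a b i) (transpose a b j) (V a b f)) T"
        using 5 by (simp add: V_def)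
    qed
  next
    case 6
    show ?thesis
    proof (rule ext)
      fix T
      have "E i (E a f) T = - E a (E i f) T" "E i (E b f) T = - E b (E i f) T" "E b (E a f) T = - E a (E b f) T"
        using 6 ab by (auto intro!: exa)
      then show "V a b (V i j f) T = (- V (transpose a b i) (transpose a b j) (V a b f)) T"
        using 6 by (simp add: V_def)
    qed
  next
    case 7
    show ?thesis
    proof (rule ext)
      fix T
      have "E i (E a f) T = - E a (E i f) T" "E i (E b f) T = - E b (E i f) T" "E b (E a f) T = - E a (E b f) T"
        using 7 ab by (auto intro!: exa)
      then show "V a b (V i j f) T = (- V (transpose a b i) (transpose a b j) (V a b f)) T"
        using 7 by (simp add: V_def)
    qed
  qed
qed

lemma V_sq: assumes ab: "a \<noteq> b" shows "V a b (V a b f) = sc 2 f"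
proof (rule ext)
  fix T
  have "E b (E a f) T = - E a (E b f) T" using EE_anti[of b a f] ab by simp
  then show "V a b (V a b f) T = sc 2 f T" by (simp add: V_def sc_def)
qed

lemma V_swap: "V j i f = - V i j f"
  by (simp add: V_def)



definition lo :: "(nat \<Rightarrow> nat) \<Rightarrow> nat" where "lo x = (LEAST k. x k \<noteq> k)"
definition hi :: "(nat \<Rightarrow> nat) \<Rightarrow> nat" where "hi x = x (lo x)"

lemma lohi: assumes "a < b" shows "lo (transpose a b) = a" "hi (transpose a b) = b"
proof -
  show l: "lo (transpose a b) = a" unfolding lo_def
  proof (rule Least_equality)
    show "transpose a b a \<noteq> a" using assms by simp
    fix y assume "transpose a b y \<noteq> y"
    then have "y = a \<or> y = b" by (metis transpose_apply_other)
    then show "a \<le> y" using assms by auto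
  qed
  show "hi (transpose a b) = b" unfolding hi_def l by simp
qed

definition U :: "(nat \<Rightarrow> nat) \<Rightarrow> (nat set \<Rightarrow> real) \<Rightarrow> (nat set \<Rightarrow> real)" where
  "U x f = V (lo x) (hi x) f"

definition epsr :: "(nat \<Rightarrow> nat) \<Rightarrow> (nat \<Rightarrow> nat) \<Rightarrow> real" where
  "epsr x y = - sg (x (lo y)) (x (hi y))"

lemma sc_m1: "sc (-1) g = - g" by (rule ext) (simp add: sc_def)
lemma sc_1: "sc 1 g = g" by (rule ext) (simp add: sc_def)

lemma U_key:
  assumes x: "x \<in> TR" and y: "y \<in> TR"
  shows "U (rack_op x y) (U x f) = sc (epsr x y) (U x (U y f))"
proof -
  obtain a b where ab: "a < b" "x = transpose a b" using x by (auto simp: TR_def)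
  obtain i j where ij: "i < j" "y = transpose i j" using y by (auto simp: TR_def)
  have bx: "bij x" using ab by simp
  have ne: "x i \<noteq> x j" using ij bx bij_is_inj by (metis injD less_irrefl)
  have K: "V (x i) (x j) (V a b f) = - V a b (V i j f)"
    using V_key[of a b i j f] ab ij by simp
  have r: "rack_op x y = transpose (x i) (x j)" using rack_op_transpose[OF bx] ij by simp
  show ?thesis
  proof (cases "x i < x j")
    case True
    then show ?thesis using K r ab ij by (simp add: U_def lohi epsr_def sg_def sc_m1)
  next
    case False
    then have lt: "x j < x i" using ne by simp
    have r2: "rack_op x y = transpose (x j) (x i)" using r transpose_commute by metis
    have sw: "V (x j) (x i) (V a b f) = V a b (V i j f)" using K V_swap[of "x j" "x i"] by simp
    have e1: "U (rack_op x y) (U x f) = V (x j) (x i) (V a b f)" using r2 lt ab by (simp add: U_def lohi)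
    have e2: "U x (U y f) = V a b (V i j f)" using ab ij by (simp add: U_def lohi)
    have e3: "epsr x y = 1" using ij lt by (simp add: epsr_def lohi sg_def)
    show ?thesis using sw e1 e2 e3 by (simp add: sc_1)
  qed
qed

lemma chi_epsr:
  assumes x: "x \<in> TR" and y: "y \<in> TR"
  shows "chi x y = of_real (- epsr x y)"
proof -
  obtain i j where ij: "i < j" "y = transpose i j" using y by (auto simp: TR_def)
  have bx: "bij x" using x TR_bij by auto
  have ne: "x i \<noteq> x j" using ij bx bij_is_inj by (metis injD less_irrefl)
  show ?thesis using chi_eq[of i j x] ij ne by (simp add: epsr_def lohi sg_def)
qed

lemma epsr_pm: "epsr x y = 1 \<or> epsr x y = -1" by (simp add: epsr_def sg_def)

lemma V_sc [simp]: "V i j (sc c f) = sc c (V i j f)"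
  by (rule ext) (simp add: V_def sc_def algebra_simps E_def)
lemma U_sc [simp]: "U x (sc c f) = sc c (U x f)" by (simp add: U_def)

definition U_list :: "(nat \<Rightarrow> nat) list \<Rightarrow> (nat set \<Rightarrow> real) \<Rightarrow> (nat set \<Rightarrow> real)" where
  "U_list w f = foldr U w f"

lemma U_list_Cons [simp]: "U_list (x # w) f = U x (U_list w f)" by (simp add: U_list_def)
lemma U_list_Nil [simp]: "U_list [] f = f" by (simp add: U_list_def)
lemma U_list_sc [simp]: "U_list w (sc c f) = sc c (U_list w f)" by (induction w) auto

lemma hurwitz:
  "set w \<subseteq> TR \<Longrightarrow> Suc k < length w \<Longrightarrow>
   U_list (w[k := rack_op (w!k) (w!Suc k), Suc k := w!k]) f = sc (epsr (w!k) (w!Suc k)) (U_list w f)"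
proof (induction w arbitrary: k)
  case Nil then show ?case by simp
next
  case (Cons z w)
  show ?case
  proof (cases k)
    case 0
    then obtain y rest where w: "w = y # rest" using Cons.prems by (cases w) auto
    show ?thesis using Cons.prems U_key[of z y "U_list rest f"] by (simp add: 0 w)
  next
    case (Suc k')
    then show ?thesis using Cons by simp
  qed
qed

lemma sc_2_zero: "sc 2 g = 0 \<Longrightarrow> g = 0"
  by (rule ext) (simp add: sc_def fun_eq_iff)

lemma U_zero: "U x 0 = 0" by (simp add: U_def V_def)

lemma U_sq: "x \<in> TR \<Longrightarrow> U x (U x g) = sc 2 g"
proof -
  assume "x \<in> TR"
  then obtain a b where ab: "a < b" "x = transpose a b" by (auto simp: TR_def)
  then show ?thesis using V_sq[of a b g] by (simp add: U_def lohi)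
qed

lemma U_list_zero: "set w \<subseteq> TR \<Longrightarrow> U_list w f = 0 \<Longrightarrow> f = 0"
proof (induction w)
  case Nil then show ?case by simp
next
  case (Cons x w)
  have h: "U x (U_list w f) = 0" using Cons.prems(2) by (simp only: U_list_Cons)
  have "U x (U x (U_list w f)) = U x 0" by (simp only: h)
  then have "U x (U x (U_list w f)) = 0" by (simp only: U_zero)
  moreover have "U x (U x (U_list w f)) = sc 2 (U_list w f)"
    using U_sq[of x "U_list w f"] Cons.prems(1) by simp
  ultimately have "sc 2 (U_list w f) = 0" by simp
  then have "U_list w f = 0" by (rule sc_2_zero)
  then show ?case using Cons.IH Cons.prems(1) by simp
qed

definition f0 :: "nat set \<Rightarrow> real" where "f0 = (\<lambda>T. if T = {} then 1 else 0)"

definition pick :: "(nat set \<Rightarrow> real) \<Rightarrow> real" where "pick g = g (SOME T. g T \<noteq> 0)"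

lemma pick_nz: "g \<noteq> 0 \<Longrightarrow> pick g \<noteq> 0"
proof -
  assume "g \<noteq> 0"
  then have "\<exists>T. g T \<noteq> 0" by (auto simp: fun_eq_iff)
  then show ?thesis unfolding pick_def by (rule someI_ex)
qed

lemma pick_sc: "c \<noteq> 0 \<Longrightarrow> pick (sc c g) = c * pick g"
proof -
  assume c: "c \<noteq> 0"
  have "(\<lambda>T. sc c g T \<noteq> 0) = (\<lambda>T. g T \<noteq> 0)" using c by (simp add: sc_def)
  then show ?thesis unfolding pick_def by (simp add: sc_def)
qed

definition dw :: "(nat \<Rightarrow> nat) list \<Rightarrow> real" where "dw w = pick (U_list w f0)"

lemma dw_nz: "set w \<subseteq> TR \<Longrightarrow> dw w \<noteq> 0"
proof -
  assume w: "set w \<subseteq> TR"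
  have "f0 \<noteq> 0" by (auto simp: f0_def fun_eq_iff)
  then have "U_list w f0 \<noteq> 0" using U_list_zero[OF w] by blast
  then show ?thesis unfolding dw_def by (rule pick_nz)
qed

lemma dw_hur: "set w \<subseteq> TR \<Longrightarrow> Suc k < length w \<Longrightarrow>
   dw (w[k := rack_op (w!k) (w!Suc k), Suc k := w!k]) = epsr (w!k) (w!Suc k) * dw w"
  unfolding dw_def using hurwitz pick_sc epsr_pm by (metis one_neq_zero neg_equal_0_iff_equal zero_neq_one)



section \<open>Reduced words exist\<close>

lemma perm_word_foldr: "foldr (\<lambda>i p. transpose i (Suc i) \<circ> p) xs q = perm_word xs \<circ> q"
  by (induction xs) (simp_all add: perm_word_def comp_assoc)

lemma perm_word_append: "perm_word (xs @ ys) = perm_word xs \<circ> perm_word ys"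
proof -
  have "perm_word (xs @ ys) = foldr (\<lambda>i p. transpose i (Suc i) \<circ> p) xs (perm_word ys)"
    by (simp add: perm_word_def)
  then show ?thesis by (simp only: perm_word_foldr)
qed

lemma adj_transpose:
  "1 \<le> a \<Longrightarrow> a + Suc d \<le> m \<Longrightarrow> \<exists>ws. set ws \<subseteq> {1..<m} \<and> perm_word ws = transpose a (a + Suc d)"
proof (induction d arbitrary: a)
  case 0
  then show ?case by (intro exI[of _ "[a]"]) (auto simp: perm_word_def)
next
  case (Suc d)
  then obtain ws where ws: "set ws \<subseteq> {1..<m}" "perm_word ws = transpose (Suc a) (Suc a + Suc d)"
    using Suc.IH[of "Suc a"] by auto
  have "transpose a (Suc a) \<circ> transpose (Suc a) (Suc a + Suc d) \<circ> transpose a (Suc a) = transpose a (Suc a + Suc d)"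
    by (rule transpose_comp_triple) auto
  moreover have "perm_word ([a] @ ws @ [a]) = transpose a (Suc a) \<circ> transpose (Suc a) (Suc a + Suc d) \<circ> transpose a (Suc a)"
  proof -
    have pa: "perm_word [a] = transpose a (Suc a)" by (simp add: perm_word_def)
    have "perm_word ([a] @ ws @ [a]) = perm_word [a] \<circ> (perm_word ws \<circ> perm_word [a])"
      by (simp only: perm_word_append)
    then show ?thesis using pa ws(2) by (simp add: comp_assoc)
  qed
  moreover have "set ([a] @ ws @ [a]) \<subseteq> {1..<m}" using ws Suc.prems by auto
  ultimately show ?case by (intro exI[of _ "[a] @ ws @ [a]"]) simp
qed

lemma any_transpose:
  assumes "a \<in> {1..m}" "b \<in> {1..m}" "a \<noteq> b"
  shows "\<exists>ws. set ws \<subseteq> {1..<m} \<and> perm_word ws = transpose a b"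
proof (cases "a < b")
  case True
  then have "b = a + Suc (b - a - 1)" by simp
  then show ?thesis using adj_transpose[of a "b - a - 1" m] assms True by auto
next
  case False
  then have lt: "b < a" using assms by simp
  then have "a = b + Suc (a - b - 1)" by simp
  then show ?thesis using adj_transpose[of b "a - b - 1" m] assms lt transpose_commute[of a b] by auto
qed

lemma perm_has_word:
  assumes "\<sigma> permutes {1..m}"
  shows "\<exists>ws. set ws \<subseteq> {1..<m} \<and> perm_word ws = \<sigma>"
  using assms finite_atLeastAtMost
proof (induction rule: permutes_induct)
  case id
  then show ?case by (intro exI[of _ "[]"]) (simp add: perm_word_def)
next
  case (swap a b p)
  then obtain ws where ws: "set ws \<subseteq> {1..<m}" "perm_word ws = p" by auto
  obtain vs where vs: "set vs \<subseteq> {1..<m}" "perm_word vs = transpose a b"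
    using any_transpose[of a m b] swap.hyps by auto
  show ?case using ws vs by (intro exI[of _ "vs @ ws"]) (simp add: perm_word_append)
qed

lemma reduced_word_set:
  assumes "\<sigma> permutes {1..m}"
  shows "set (reduced_word m \<sigma>) \<subseteq> {1..<m}"
proof -
  let ?P = "\<lambda>ws. set ws \<subseteq> {1..<m} \<and> perm_word ws = \<sigma>"
  obtain ws0 where "?P ws0" using perm_has_word[OF assms] by auto
  then have "\<exists>ws. ?P ws \<and> (\<forall>vs. ?P vs \<longrightarrow> length ws \<le> length vs)"
    by (rule ex_has_least_nat)
  then have "\<exists>ws. set ws \<subseteq> {1..<m} \<and> perm_word ws = \<sigma> \<and>
      (\<forall>vs. set vs \<subseteq> {1..<m} \<and> perm_word vs = \<sigma> \<longrightarrow> length ws \<le> length vs)" by blast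
  from someI_ex[OF this] show ?thesis unfolding reduced_word_def by blast
qed

section \<open>Conjugating Q\<close>

definition dd :: "(nat \<Rightarrow> nat) list \<Rightarrow> real" where
  "dd w = (if dw w = 0 then 1 else dw w)"

definition DD :: "((nat \<Rightarrow> nat) list \<Rightarrow> complex) \<Rightarrow> ((nat \<Rightarrow> nat) list \<Rightarrow> complex)" where
  "DD f = (\<lambda>w. complex_of_real (dd w) * f w)"

lemma dd_nz: "dd w \<noteq> 0" by (simp add: dd_def)

lemma braid_gen_DD:
  assumes i: "1 \<le> i" "i < m"
  shows "braid_gen (Xn n) rack_op chi m i (DD f) = DD (braid_gen (Xn n) rack_op (\<lambda>_ _. -1) m i f)"
proof (rule ext)
  fix v
  obtain k where k: "i = Suc k" using i by (cases i) auto
  let ?t = "\<lambda>w::(nat \<Rightarrow> nat) list. w[k := rack_op (w!k) (w!Suc k), Suc k := w!k]"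
  have "braid_gen (Xn n) rack_op chi m i (DD f) v =
        (\<Sum>w\<in>words (Xn n) m. if v = ?t w then chi (w!k) (w!Suc k) * (complex_of_real (dd w) * f w) else 0)"
    unfolding braid_gen_def DD_def k diff_Suc_1 by simp
  also have "\<dots> = (\<Sum>w\<in>words (Xn n) m. complex_of_real (dd v) * (if v = ?t w then -1 * f w else 0))"
  proof (rule sum.cong[OF refl])
    fix w assume w: "w \<in> words (Xn n) m"
    then have len: "length w = m" and sw: "set w \<subseteq> TR" using Xn_TR by (auto simp: words_def)
    have kl: "Suc k < length w" using len i k by simp
    have wk: "w!k \<in> TR" "w!Suc k \<in> TR" using sw kl by auto
    have nz: "dw w \<noteq> 0" using dw_nz[OF sw] .
    have h: "dw (?t w) = epsr (w!k) (w!Suc k) * dw w" using dw_hur[OF sw kl] .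
    have e: "epsr (w!k) (w!Suc k) \<noteq> 0" using epsr_pm[of "w!k" "w!Suc k"] by auto
    have ddt: "dd (?t w) = epsr (w!k) (w!Suc k) * dd w" using h nz e by (simp add: dd_def)
    have c: "chi (w!k) (w!Suc k) = complex_of_real (- epsr (w!k) (w!Suc k))" using chi_epsr wk by auto
    show "(if v = ?t w then chi (w!k) (w!Suc k) * (complex_of_real (dd w) * f w) else 0) =
          complex_of_real (dd v) * (if v = ?t w then -1 * f w else 0)"
      using ddt c by simp
  qed
  also have "\<dots> = DD (braid_gen (Xn n) rack_op (\<lambda>_ _. -1) m i f) v"
    unfolding braid_gen_def DD_def k diff_Suc_1 by (simp add: sum_distrib_left)
  finally show "braid_gen (Xn n) rack_op chi m i (DD f) v = DD (braid_gen (Xn n) rack_op (\<lambda>_ _. -1) m i f) v" .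
qed

lemma rho_word_Cons: "rho_word X r q m (i # ws) f = braid_gen X r q m i (rho_word X r q m ws f)"
  by (simp add: rho_word_def)

lemma rho_word_DD:
  "set ws \<subseteq> {1..<m} \<Longrightarrow> rho_word (Xn n) rack_op chi m ws (DD f) = DD (rho_word (Xn n) rack_op (\<lambda>_ _. -1) m ws f)"
proof (induction ws)
  case Nil then show ?case by (simp add: rho_word_def)
next
  case (Cons i ws)
  then show ?case by (simp add: rho_word_Cons braid_gen_DD)
qed

lemma Q_DD: "Q_op (Xn n) rack_op chi m (DD f) = DD (Q_op (Xn n) rack_op (\<lambda>_ _. -1) m f)"
proof (rule ext)
  fix w
  have "Q_op (Xn n) rack_op chi m (DD f) w =
      (\<Sum>\<sigma>\<in>{\<sigma>. \<sigma> permutes {1..m}}. DD (rho_word (Xn n) rack_op (\<lambda>_ _. -1) m (reduced_word m \<sigma>) f) w)"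
    unfolding Q_op_def
  proof (rule sum.cong[OF refl])
    fix \<sigma> assume "\<sigma> \<in> {\<sigma>. \<sigma> permutes {1..m}}"
    then have "set (reduced_word m \<sigma>) \<subseteq> {1..<m}" using reduced_word_set by blast
    then show "rho_word (Xn n) rack_op chi m (reduced_word m \<sigma>) (DD f) w =
      DD (rho_word (Xn n) rack_op (\<lambda>_ _. -1) m (reduced_word m \<sigma>) f) w"
      using rho_word_DD by metis
  qed
  also have "\<dots> = DD (Q_op (Xn n) rack_op (\<lambda>_ _. -1) m f) w"
    by (simp add: DD_def Q_op_def sum_distrib_left)
  finally show "Q_op (Xn n) rack_op chi m (DD f) w = DD (Q_op (Xn n) rack_op (\<lambda>_ _. -1) m f) w" .
qed

lemma vs_fun: "vector_space (\<lambda>(c::complex) (f::'a \<Rightarrow> complex) w. c * f w)"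
  by unfold_locales (auto simp: fun_eq_iff algebra_simps)

lemma dim_inj_image:
  fixes F :: "('a \<Rightarrow> complex) \<Rightarrow> ('a \<Rightarrow> complex)"
  assumes lin: "Vector_Spaces.linear (\<lambda>(c::complex) (f::'a \<Rightarrow> complex) w. c * f w) (\<lambda>(c::complex) (f::'a \<Rightarrow> complex) w. c * f w) F"
    and inj: "inj F"
  shows "vector_space.dim (\<lambda>(c::complex) (f::'a \<Rightarrow> complex) w. c * f w) (F ` S) =
         vector_space.dim (\<lambda>(c::complex) (f::'a \<Rightarrow> complex) w. c * f w) S"
proof -
  interpret vs: vector_space "\<lambda>(c::complex) (f::'a \<Rightarrow> complex) w. c * f w" by (rule vs_fun)
  interpret lf: Vector_Spaces.linear "\<lambda>(c::complex) (f::'a \<Rightarrow> complex) w. c * f w" "\<lambda>(c::complex) (f::'a \<Rightarrow> complex) w. c * f w" F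
    by (rule lin)
  obtain B where B: "B \<subseteq> S" "vs.independent B" "S \<subseteq> vs.span B" "card B = vs.dim S"
    using vs.basis_exists[of S] by auto
  then have sp: "vs.span S = vs.span B"
    using vs.span_mono[of B S] vs.span_mono[of S "vs.span B"] vs.span_span[of B] by auto
  have cB: "card (F ` B) = card B"
    using inj card_image[of F B] inj_on_subset[of F UNIV B] by auto
  have iB: "vs.independent (F ` B)"
    using B(2) lf.dependent_inj_imageD[of B] inj_on_subset[of F UNIV] inj by auto
  have "vs.span (F ` S) = vs.span (F ` B)"
    by (simp add: lf.span_image sp)
  then have "vs.dim (F ` S) = vs.dim (F ` B)"
    by (metis vs.dim_span)
  also have "\<dots> = card (F ` B)" using iB by (rule vs.dim_eq_card_independent)
  finally show ?thesis using cB B(4) by simp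
qed

lemma DD_linear: "Vector_Spaces.linear (\<lambda>(c::complex) (f::(nat \<Rightarrow> nat) list \<Rightarrow> complex) w. c * f w) (\<lambda>(c::complex) (f::(nat \<Rightarrow> nat) list \<Rightarrow> complex) w. c * f w) DD"
  unfolding Vector_Spaces.linear_iff using vs_fun by (auto simp: DD_def fun_eq_iff algebra_simps)

lemma DD_inj: "inj DD"
proof (rule injI)
  fix f g assume "DD f = DD g"
  then have "\<And>w. complex_of_real (dd w) * f w = complex_of_real (dd w) * g w" by (metis DD_def)
  then show "f = g" using dd_nz by (auto simp: fun_eq_iff)
qed

lemma DD_TS: "DD ` tensor_space X m = tensor_space X m"
proof
  show "DD ` tensor_space X m \<subseteq> tensor_space X m" by (auto simp: DD_def tensor_space_def)
  show "tensor_space X m \<subseteq> DD ` tensor_space X m"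
  proof
    fix g assume g: "g \<in> tensor_space X m"
    let ?h = "\<lambda>w. g w / complex_of_real (dd w)"
    have "?h \<in> tensor_space X m" using g by (auto simp: tensor_space_def)
    moreover have "DD ?h = g" using dd_nz by (simp add: DD_def fun_eq_iff)
    ultimately show "g \<in> DD ` tensor_space X m" by (metis image_eqI)
  qed
qed

lemma nichols_eq: "nichols_dim (Xn n) rack_op (\<lambda>_ _. -1) m = nichols_dim (Xn n) rack_op chi m"
proof -
  let ?TS = "tensor_space (Xn n) m"
  have "Q_op (Xn n) rack_op chi m ` ?TS = Q_op (Xn n) rack_op chi m ` DD ` ?TS" by (simp add: DD_TS)
  also have "\<dots> = DD ` Q_op (Xn n) rack_op (\<lambda>_ _. -1) m ` ?TS" by (simp add: image_image Q_DD)
  finally have e: "Q_op (Xn n) rack_op chi m ` ?TS = DD ` Q_op (Xn n) rack_op (\<lambda>_ _. -1) m ` ?TS" .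
  show ?thesis unfolding nichols_dim_def e by (rule dim_inj_image[OF DD_linear DD_inj, symmetric])
qed


theorem theorem3p8:
  fixes n :: nat
  assumes "n \<ge> 4"
  shows "rack_2cocycle (Xn n) rack_op chi
       \<and> rack_2cocycle (Xn n) rack_op (\<lambda>_ _. -1)
       \<and> equiv_by_twist (Xn n) rack_op (\<lambda>_ _. -1) chi
       \<and> hilbert_series (Xn n) rack_op (\<lambda>_ _. -1) = hilbert_series (Xn n) rack_op chi"
proof (intro conjI)
  show "rack_2cocycle (Xn n) rack_op chi"
    unfolding rack_2cocycle_def
  proof (intro conjI ballI)
    fix x y assume "x \<in> Xn n" "y \<in> Xn n"
    show "chi x y \<noteq> 0" by (simp add: chi_def)
  next
    fix x y z assume xyz: "x \<in> Xn n" "y \<in> Xn n" "z \<in> Xn n"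
    then have "x \<in> TR" "y \<in> TR" "z \<in> TR" using Xn_TR by auto
    then show "chi x (rack_op y z) * chi y z = chi (rack_op x y) (rack_op x z) * chi x z"
      using chi_cocycle TR_bij by blast
  qed
  show "rack_2cocycle (Xn n) rack_op (\<lambda>_ _. -1)"
    by (simp add: rack_2cocycle_def)
  show "equiv_by_twist (Xn n) rack_op (\<lambda>_ _. -1) chi"
    unfolding equiv_by_twist_def
  proof (intro exI[of _ "\<lambda>x y. complex_of_real (dw [x, y])"] conjI ballI)
    fix x y assume xy: "x \<in> Xn n" "y \<in> Xn n"
    then have s: "set [x, y] \<subseteq> TR" using Xn_TR by auto
    show "complex_of_real (dw [x, y]) \<noteq> 0" using dw_nz[OF s] by simp
  next
    fix x y assume xy: "x \<in> Xn n" "y \<in> Xn n"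
    then have s: "set [x, y] \<subseteq> TR" and tr: "x \<in> TR" "y \<in> TR" using Xn_TR by auto
    have h: "dw [rack_op x y, x] = epsr x y * dw [x, y]"
      using dw_hur[OF s, of 0] by simp
    have nz: "dw [x, y] \<noteq> 0" using dw_nz[OF s] .
    have c: "chi x y = complex_of_real (- epsr x y)" using chi_epsr[OF tr] .
    show "chi x y = twist rack_op (\<lambda>_ _. -1) (\<lambda>x y. complex_of_real (dw [x, y])) x y"
      using epsr_pm[of x y] nz
      by (auto simp: twist_def h c field_simps)
  qed
  show "hilbert_series (Xn n) rack_op (\<lambda>_ _. -1) = hilbert_series (Xn n) rack_op chi"
    unfolding hilbert_series_def using nichols_eq by presburger
qed

end
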